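(* Let $n\ge1$, $k=\lfloor\log_2 n\rfloor$ and $r=n-2^k$. Let $A\in\mathbb{R}^{n\times n}$ be the unit-row tree matrix of size $n$ (defined in the context). Then $$\beta(A)=\Big(2\sqrt{k+1}-\sqrt{k+2}\Big)+\frac{n}{2^{k}}\Big(\sqrt{k+2}-\sqrt{k+1}\Big).$$ In particular, when $n=2^k$, $\beta(A)=\sqrt{k+1}$.
   Context: For $A\in\mathbb{R}^{m\times n}$, $\beta(A)=\frac{1}{2^n}\sum_{x\in\{-1,1\}^n}\|Ax\|_\infty$. Tree matrix: with $k=\lfloor\log_2 n\rfloor$ and $r=n-2^k$, list the $2^k$ sign strings $s\in\{-1,1\}^k$ in lexicographic order (with $-1<+1$). Replace each of the first $r$ strings $s$ by its two extensions $(s,-1)$ and $(s,+1)$ (keeping the order), and keep the remaining $2^k-r$ strings unchanged; this gives $n$ strings, $2r$ of length $k+1$ and $2^k-r$ of length $k$ (they are the root-to-leaf paths of a binary tree with $n$ leaves filled from the left, with left edges labeled $-1$ and right edges $+1$). For each such string $t$, form the row vector in $\mathbb{R}^n$ given by $(1,t,0,\dots,0)$ (a leading $1$, then $t$, then zeros to length $n$), and divide it by its Euclidean norm (i.e. by $\sqrt{k+2}$ or $\sqrt{k+1}$). The $n\times n$ matrix with these rows is the unit-row tree matrix. *)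

theory Defs
  imports Complex_Main
begin

text \<open>Matrices of size m x n are represented as functions nat => nat => real,
  with only the entries i < m, j < n being relevant.\<close>

definition sign_vectors :: "nat \<Rightarrow> real list set" where
  "sign_vectors n = {xs. length xs = n \<and> set xs \<subseteq> {-1, 1}}"

definition inf_norm_Ax :: "nat \<Rightarrow> nat \<Rightarrow> (nat \<Rightarrow> nat \<Rightarrow> real) \<Rightarrow> real list \<Rightarrow> real" where
  "inf_norm_Ax m n A x = Max ((\<lambda>i. \<bar>\<Sum>j<n. A i j * x ! j\<bar>) ` {..<m})"

definition beta :: "nat \<Rightarrow> nat \<Rightarrow> (nat \<Rightarrow> nat \<Rightarrow> real) \<Rightarrow> real" where
  "beta m n A = (1 / 2 ^ n) * (\<Sum>x\<in>sign_vectors n. inf_norm_Ax m n A x)"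

fun sign_strings :: "nat \<Rightarrow> real list list" where
  "sign_strings 0 = [[]]"
| "sign_strings (Suc k) = map (\<lambda>s. (-1) # s) (sign_strings k) @ map (\<lambda>s. 1 # s) (sign_strings k)"

definition tree_k :: "nat \<Rightarrow> nat" where
  "tree_k n = nat \<lfloor>log 2 (real n)\<rfloor>"

text \<open>The n strings (root-to-leaf paths of the binary tree with n leaves).\<close>
definition tree_strings :: "nat \<Rightarrow> real list list" where
  "tree_strings n = (let k = tree_k n; r = n - 2 ^ k; ss = sign_strings k in
     concat (map (\<lambda>s. [s @ [-1], s @ [1]]) (take r ss)) @ drop r ss)"

definition euclid_norm :: "real list \<Rightarrow> real" where
  "euclid_norm v = sqrt (\<Sum>a\<leftarrow>v. a ^ 2)"

definition tree_row :: "nat \<Rightarrow> real list \<Rightarrow> real list" where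
  "tree_row n t = (let v = (1 # t) @ replicate (n - (length t + 1)) 0 in
     map (\<lambda>a. a / euclid_norm v) v)"

definition unit_row_tree_matrix :: "nat \<Rightarrow> nat \<Rightarrow> nat \<Rightarrow> real" where
  "unit_row_tree_matrix n i j = tree_row n (tree_strings n ! i) ! j"

end

theory Submission
  imports Defs
begin


lemma ss_len: "length (sign_strings k) = 2^k"
  by (induction k) auto

lemma sv_Suc: "sign_vectors (Suc k) = (\<lambda>s. (-1) # s) ` sign_vectors k \<union> (\<lambda>s. 1 # s) ` sign_vectors k"
  unfolding sign_vectors_def by (auto simp: length_Suc_conv)

lemma ss_set: "set (sign_strings k) = sign_vectors k"
proof (induction k)
  case 0 then show ?case by (auto simp: sign_vectors_def)
next
  case (Suc k) then show ?case by (simp add: sv_Suc)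
qed

lemma ss_distinct: "distinct (sign_strings k)"
  by (induction k) (auto simp: distinct_map inj_on_def)

lemma sv_finite: "finite (sign_vectors k)"
  by (metis ss_set List.finite_set)

lemma sv_card: "card (sign_vectors k) = 2^k"
  by (metis ss_set ss_distinct distinct_card ss_len)

lemma sum_take:
  "(\<Sum>x\<in>sign_vectors (m+l). F (take m x)) = 2^l * (\<Sum>z\<in>sign_vectors m. (F z :: real))"
proof -
  have img: "sign_vectors (m+l) = (\<lambda>(a,b). a@b) ` (sign_vectors m \<times> sign_vectors l)"
  proof (rule set_eqI, rule iffI)
    fix x assume x: "x \<in> sign_vectors (m+l)"
    then have "take m x \<in> sign_vectors m" "drop m x \<in> sign_vectors l"
      unfolding sign_vectors_def using set_take_subset set_drop_subset by fastforce+
    then show "x \<in> (\<lambda>(a,b). a@b) ` (sign_vectors m \<times> sign_vectors l)"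
      by (intro image_eqI[where x="(take m x, drop m x)"]) auto
  qed (auto simp: sign_vectors_def)
  have inj: "inj_on (\<lambda>(a,b). a@b) (sign_vectors m \<times> sign_vectors l)"
    by (auto simp: inj_on_def sign_vectors_def)
  have "(\<Sum>x\<in>sign_vectors (m+l). F (take m x)) =
      (\<Sum>p\<in>sign_vectors m \<times> sign_vectors l. F (take m (case p of (a,b) \<Rightarrow> a@b)))"
    by (simp add: img sum.reindex[OF inj] comp_def)
  also have "\<dots> = (\<Sum>p\<in>sign_vectors m \<times> sign_vectors l. F (fst p))"
    by (intro sum.cong) (auto simp: sign_vectors_def)
  also have "\<dots> = (\<Sum>a\<in>sign_vectors m. \<Sum>b\<in>sign_vectors l. F a)"
    using sum.cartesian_product[of "\<lambda>a b. F a" "sign_vectors l" "sign_vectors m"]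
    by (simp add: case_prod_beta')
  also have "\<dots> = 2^l * (\<Sum>z\<in>sign_vectors m. F z)"
    by (simp add: sv_card sum_distrib_left sum_distrib_right)
  finally show ?thesis .
qed

lemma sum_flip:
  "(\<Sum>z\<in>sign_vectors (Suc k). G (map (\<lambda>a. hd z * a) (tl z))) = 2 * (\<Sum>s\<in>sign_vectors k. (G s :: real))"
proof -
  have d: "(\<lambda>s. (-1) # s) ` sign_vectors k \<inter> (\<lambda>s. (1::real) # s) ` sign_vectors k = {}" by auto
  have fl: "(\<Sum>s\<in>sign_vectors k. G (map uminus s)) = (\<Sum>s\<in>sign_vectors k. G s)"
    by (rule sum.reindex_bij_witness[where i="map uminus" and j="map uminus"])
       (auto simp: sign_vectors_def)
  have e: "map ((*) (-1::real)) = map uminus" "map ((*) (1::real)) = id" by (auto simp: fun_eq_iff map_idI)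
  show ?thesis
    unfolding sv_Suc
    by (subst sum.union_disjoint) (auto simp: sv_finite d sum.reindex inj_on_def fl e)
qed



definition dot :: "real list \<Rightarrow> real list \<Rightarrow> real" where
  "dot t x = x!0 + (\<Sum>j<length t. t!j * x!(j+1))"

lemma sq_len: "set t \<subseteq> {-1,1} \<Longrightarrow> (\<Sum>a\<leftarrow>t. a^2) = real (length t)"
  by (induction t) auto

lemma pm_mult: "a \<in> {-1,1::real} \<Longrightarrow> b \<in> {-1,1} \<Longrightarrow> a*b = (if a = b then 1 else -1)"
  by auto

lemma row_sum:
  assumes t: "set t \<subseteq> {-1,1}" and L: "length t + 1 \<le> n" and x: "length x = n"
  shows "(\<Sum>j<n. tree_row n t ! j * x!j) = dot t x / sqrt (real (length t) + 1)"
proof -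
  define v where "v = (1 # t) @ replicate (n - (length t + 1)) (0::real)"
  have lv: "length v = n" using L by (simp add: v_def)
  have en: "euclid_norm v = sqrt (real (length t) + 1)"
    unfolding euclid_norm_def v_def using sq_len[OF t] by (simp add: sum_list_replicate)
  have tr: "tree_row n t = map (\<lambda>a. a / sqrt (real (length t) + 1)) v"
    unfolding tree_row_def Let_def v_def[symmetric] en ..
  have "(\<Sum>j<n. tree_row n t ! j * x!j) = (\<Sum>j<n. v ! j * x!j / sqrt (real (length t) + 1))"
    by (intro sum.cong) (auto simp: tr lv)
  also have "\<dots> = (\<Sum>j<n. v ! j * x!j) / sqrt (real (length t) + 1)"
    by (simp add: sum_divide_distrib)
  also have "(\<Sum>j<n. v ! j * x!j) = (\<Sum>j<Suc (length t). v ! j * x!j)"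
    by (rule sum.mono_neutral_right) (use L in \<open>auto simp: v_def nth_append\<close>)
  also have "\<dots> = dot t x"
    unfolding sum.lessThan_Suc_shift dot_def by (simp add: v_def nth_append)
  finally show ?thesis .
qed

lemma dot_key:
  assumes t: "set t \<subseteq> {-1,1}" and x: "set x \<subseteq> {-1,1}" and L: "length t + 1 \<le> length x"
  shows "x!0 * dot t x = 1 + (\<Sum>j<length t. if t!j = x!0 * x!(j+1) then 1 else -1)"
proof -
  have "x!0 \<in> set x" using L by (intro nth_mem) auto
  then have x0: "x!0 \<in> {-1,1}" using x by auto
  have xj: "x!(j+1) \<in> {-1,1}" if "j < length t" for j proof -
    have "x!(j+1) \<in> set x" using L that by (intro nth_mem) auto
    then show ?thesis using x by auto qed
  have tj: "t!j \<in> {-1,1}" if "j < length t" for j proof -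
    have "t!j \<in> set t" using that by (intro nth_mem) auto
    then show ?thesis using t by auto qed
  have "x!0 * dot t x = x!0*x!0 + (\<Sum>j<length t. t!j * (x!0 * x!(j+1)))"
    by (simp add: dot_def algebra_simps sum_distrib_left)
  also have "\<dots> = 1 + (\<Sum>j<length t. if t!j = x!0 * x!(j+1) then 1 else -1)"
  proof (intro arg_cong2[where f="(+)"] sum.cong refl)
    show "x!0*x!0 = 1" using x0 by auto
    fix j assume "j \<in> {..<length t}"
    then have "x!0 * x!(j+1) \<in> {-1,1}" using x0 xj[of j] by auto
    then show "t!j * (x!0 * x!(j+1)) = (if t!j = x!0 * x!(j+1) then 1 else -1)"
      using tj \<open>j \<in> _\<close> by (intro pm_mult) auto
  qed
  finally show ?thesis .
qed

lemma abs_x0: "set (x::real list) \<subseteq> {-1,1} \<Longrightarrow> x \<noteq> [] \<Longrightarrow> \<bar>x!0 * a\<bar> = \<bar>a\<bar>"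
proof -
  assume "set x \<subseteq> {-1,1}" "x \<noteq> []"
  then have "x!0 \<in> {-1,1}" by (auto intro!: nth_mem)
  then show ?thesis by auto
qed

lemma dot_le:
  assumes t: "set t \<subseteq> {-1,1}" and x: "set x \<subseteq> {-1,1}" and L: "length t + 1 \<le> length x"
  shows "\<bar>dot t x\<bar> \<le> real (length t) + 1"
proof -
  have "\<bar>dot t x\<bar> = \<bar>1 + (\<Sum>j<length t. if t!j = x!0 * x!(j+1) then 1 else -1)\<bar>"
    using dot_key[OF assms] abs_x0[OF x, of "dot t x"] L by (cases x) auto
  also have "\<dots> \<le> 1 + \<bar>\<Sum>j<length t. if t!j = x!0 * x!(j+1) then 1 else (-1::real)\<bar>" by simp
  also have "\<bar>\<Sum>j<length t. if t!j = x!0 * x!(j+1) then 1 else (-1::real)\<bar> \<le> (\<Sum>j<length t. 1)"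
    by (rule order_trans[OF sum_abs]) (intro sum_mono, auto)
  finally show ?thesis by simp
qed

lemma dot_eq:
  assumes t: "set t \<subseteq> {-1,1}" and x: "set x \<subseteq> {-1,1}" and L: "length t + 1 \<le> length x"
    and m: "\<And>j. j < length t \<Longrightarrow> t!j = x!0 * x!(j+1)"
  shows "\<bar>dot t x\<bar> = real (length t) + 1"
proof -
  have "\<bar>dot t x\<bar> = \<bar>1 + (\<Sum>j<length t. if t!j = x!0 * x!(j+1) then 1 else -1)\<bar>"
    using dot_key[OF t x L] abs_x0[OF x, of "dot t x"] L by (cases x) auto
  also have "(\<Sum>j<length t. if t!j = x!0 * x!(j+1) then 1 else (-1::real)) = (\<Sum>j<length t. 1)"
    using m by (intro sum.cong) auto
  finally show ?thesis by simp
qed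

lemma dot_mis:
  assumes t: "set t \<subseteq> {-1,1}" and x: "set x \<subseteq> {-1,1}" and L: "length t + 1 \<le> length x"
    and j: "j < length t" "t!j \<noteq> x!0 * x!(j+1)"
  shows "\<bar>dot t x\<bar> + 1 \<le> real (length t)"
proof -
  define f where "f = (\<lambda>j. if t!j = x!0 * x!(j+1) then 1 else (-1::real))"
  have "\<bar>dot t x\<bar> = \<bar>1 + sum f {..<length t}\<bar>"
    using dot_key[OF t x L] abs_x0[OF x, of "dot t x"] L unfolding f_def by (cases x) auto
  also have "sum f {..<length t} = f j + sum f ({..<length t} - {j})"
    using j by (intro sum.remove) auto
  also have "f j = -1" using j by (simp add: f_def)
  also have "\<bar>1 + (-1 + sum f ({..<length t} - {j}))\<bar> = \<bar>sum f ({..<length t} - {j})\<bar>" by simp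
  also have "\<dots> \<le> (\<Sum>i\<in>{..<length t} - {j}. 1)"
    by (rule order_trans[OF sum_abs]) (intro sum_mono, auto simp: f_def)
  also have "\<dots> = real (length t) - 1" using j by simp
  finally show ?thesis by simp
qed



lemma k_bounds:
  assumes "n \<ge> 1" shows "2^(tree_k n) \<le> n \<and> n < 2^(tree_k n + 1)"
proof -
  have "log 2 (real n) \<ge> 0" using assms by simp
  then have "int (tree_k n) = \<lfloor>log 2 (real n)\<rfloor>" unfolding tree_k_def by simp
  then have "\<lfloor>log (real (2::nat)) (real n)\<rfloor> = int (tree_k n)" by simp
  then show ?thesis using floor_log_nat_eq_powr_iff[of 2 n "tree_k n"] assms by simp
qed

lemma len_concat2: "length (concat (map (\<lambda>s. [f s, g s]) xs)) = 2 * length xs"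
  by (induction xs) auto

lemma ts_mem: "t \<in> set (tree_strings n) \<longleftrightarrow>
   (\<exists>s\<in>set (take (n - 2^tree_k n) (sign_strings (tree_k n))). t = s@[-1] \<or> t = s@[1])
   \<or> t \<in> set (drop (n - 2^tree_k n) (sign_strings (tree_k n)))"
  unfolding tree_strings_def Let_def by auto

lemma ts_len: assumes "n \<ge> 1" shows "length (tree_strings n) = n"
proof -
  have "n - 2^tree_k n \<le> 2^tree_k n" using k_bounds[OF assms] by (simp; linarith)
  then show ?thesis using k_bounds[OF assms]
    unfolding tree_strings_def Let_def by (simp add: len_concat2 ss_len; arith)
qed

lemma ss_elem: "s \<in> set (sign_strings k) \<Longrightarrow> set s \<subseteq> {-1,1} \<and> length s = k"
  using ss_set[of k] by (auto simp: sign_vectors_def)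

lemma ts_elem:
  assumes "n \<ge> 1" "t \<in> set (tree_strings n)"
  shows "set t \<subseteq> {-1,1} \<and> length t \<le> tree_k n + 1 \<and> length t + 1 \<le> n"
proof -
  let ?k = "tree_k n"
  have kb: "?k + 1 \<le> 2^?k" using less_exp[of ?k] by (simp only: Suc_le_eq Suc_eq_plus1[symmetric])
  from assms(2)[unfolded ts_mem] show ?thesis
  proof
    assume "\<exists>s\<in>set (take (n - 2^?k) (sign_strings ?k)). t = s@[-1] \<or> t = s@[1]"
    then obtain s where s: "s \<in> set (take (n - 2^?k) (sign_strings ?k))" "t = s@[-1] \<or> t = s@[1]" by blast
    from s(1) have "n - 2^?k > 0" by (cases "n - 2^?k") auto
    moreover have "set s \<subseteq> {-1,1} \<and> length s = ?k" using s(1) ss_elem in_set_takeD by metis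
    ultimately show ?thesis using s(2) kb by auto
  next
    assume "t \<in> set (drop (n - 2^?k) (sign_strings ?k))"
    then have "set t \<subseteq> {-1,1} \<and> length t = ?k" using ss_elem in_set_dropD by metis
    then show ?thesis using kb k_bounds[OF assms(1)] by auto
  qed
qed



lemma sqrt_bound:
  assumes "\<bar>d\<bar> \<le> real L + 1"
  shows "\<bar>d\<bar> / sqrt (real L + 1) \<le> sqrt (real L + 1)"
proof -
  have "\<bar>d\<bar> / sqrt (real L + 1) \<le> (real L + 1) / sqrt (real L + 1)"
    using assms by (intro divide_right_mono) auto
  also have "\<dots> = sqrt (real L + 1)" by (rule real_div_sqrt) simp
  finally show ?thesis .
qed

lemma point:
  assumes n1: "n \<ge> 1" and x: "x \<in> sign_vectors n"
  defines "k \<equiv> tree_k n"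
  defines "r \<equiv> n - 2^k"
  shows "inf_norm_Ax n n (unit_row_tree_matrix n) x =
    (if map (\<lambda>a. hd (take (k+1) x) * a) (tl (take (k+1) x)) \<in> set (take r (sign_strings k))
     then sqrt (real k + 2) else sqrt (real k + 1))"
proof -
  let ?ts = "tree_strings n"
  define h where "h = (\<lambda>t. \<bar>dot t x\<bar> / sqrt (real (length t) + 1))"
  have lx: "length x = n" and sx: "set x \<subseteq> {-1,1}" using x by (auto simp: sign_vectors_def)
  have kb0: "k + 1 \<le> 2^k" using less_exp[of k] by (simp only: Suc_le_eq Suc_eq_plus1[symmetric])
  have kn: "2^k \<le> n" using k_bounds[OF n1] by (simp add: k_def)
  have rows: "\<bar>\<Sum>j<n. unit_row_tree_matrix n i j * x!j\<bar> = h (?ts!i)" if "i < n" for i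
  proof -
    have "?ts!i \<in> set ?ts" using that ts_len[OF n1] by simp
    then have e: "set (?ts!i) \<subseteq> {-1,1}" "length (?ts!i) + 1 \<le> n" using ts_elem[OF n1] by auto
    show ?thesis unfolding unit_row_tree_matrix_def h_def row_sum[OF e lx]
      by (simp add: abs_divide)
  qed
  have img: "(\<lambda>i. \<bar>\<Sum>j<n. unit_row_tree_matrix n i j * x!j\<bar>) ` {..<n} = h ` set ?ts"
  proof -
    have "(\<lambda>i. \<bar>\<Sum>j<n. unit_row_tree_matrix n i j * x!j\<bar>) ` {..<n} = h ` ((!) ?ts ` {..<n})"
      using rows by (auto simp: image_iff)
    also have "(!) ?ts ` {..<n} = set ?ts" using ts_len[OF n1] by (auto simp: set_conv_nth)
    finally show ?thesis .
  qed
  have fin: "finite (h ` set ?ts)" by simp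
  have tel: "set t \<subseteq> {-1,1} \<and> length t \<le> k + 1 \<and> length t + 1 \<le> length x" if "t \<in> set ?ts" for t
    using ts_elem[OF n1 that] lx by (simp add: k_def)
  have hb: "h t \<le> sqrt (real (length t) + 1)" if "t \<in> set ?ts" for t
    unfolding h_def using tel[OF that] dot_le[of t x] sx by (intro sqrt_bound) auto
  obtain a xs where xa: "x = a # xs" using n1 lx by (cases x) auto
  have lxs: "length xs + 1 = n" using lx xa by simp
  define y where "y = map (\<lambda>b. a * b) (take k xs)"
  have ye: "map (\<lambda>b. hd (take (k+1) x) * b) (tl (take (k+1) x)) = y"
    by (simp add: xa y_def)
  have ly: "length y = k" using kb0 kn lxs by (simp add: y_def)
  have a1: "a \<in> {-1,1}" using sx xa by auto
  have xs1: "set xs \<subseteq> {-1,1}" using sx xa by auto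
  have ysv: "y \<in> sign_vectors k"
    unfolding sign_vectors_def using ly a1 xs1 set_take_subset[of k xs] by (auto simp: y_def)
  have yj: "y!j = x!0 * x!(j+1)" if "j < k" for j
    using that ly by (simp add: y_def xa)
  have yss: "y \<in> set (sign_strings k)" using ysv ss_set by simp
  have ys: "set y \<subseteq> {-1,1}" using ysv by (simp add: sign_vectors_def)
  have tsm: "\<And>t. t \<in> set ?ts \<longleftrightarrow> (\<exists>s\<in>set (take r (sign_strings k)). t = s@[-1] \<or> t = s@[1])
             \<or> t \<in> set (drop r (sign_strings k))"
    unfolding r_def k_def by (rule ts_mem)
  show ?thesis
  proof (cases "y \<in> set (take r (sign_strings k))")
    case True
    then have "r > 0" by (cases r) auto
    then have kn2: "k + 2 \<le> n" using kb0 kn by (simp add: r_def)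
    define c where "c = x!0 * x!(k+1)"
    have "x!(k+1) \<in> set x" using kn2 lx by (intro nth_mem) auto
    then have c1: "c \<in> {-1,1}" using a1 sx xa by (auto simp: c_def)
    define t where "t = y @ [c]"
    have tin: "t \<in> set ?ts" unfolding tsm using True c1 by (auto simp: t_def)
    have "\<bar>dot t x\<bar> = real (length t) + 1"
    proof (rule dot_eq)
      show "set t \<subseteq> {-1,1}" using ys c1 by (auto simp: t_def)
      show "set x \<subseteq> {-1,1}" by (rule sx)
      show "length t + 1 \<le> length x" using ly kn2 lx by (simp add: t_def)
      fix j assume "j < length t"
      then show "t!j = x!0 * x!(j+1)" using yj ly by (auto simp: t_def nth_append c_def less_Suc_eq)
    qed
    then have ht: "h t = sqrt (real k + 2)"
      unfolding h_def using ly by (simp add: t_def real_div_sqrt add.commute)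
    have "Max (h ` set ?ts) = sqrt (real k + 2)"
    proof (rule Max_eqI[OF fin])
      fix v assume "v \<in> h ` set ?ts"
      then obtain t' where t': "t' \<in> set ?ts" "v = h t'" by auto
      have "sqrt (real (length t') + 1) \<le> sqrt (real k + 2)" using tel[OF t'(1)] by simp
      then show "v \<le> sqrt (real k + 2)" using hb[OF t'(1)] t'(2) by linarith
    next
      show "sqrt (real k + 2) \<in> h ` set ?ts" using tin ht by (metis image_eqI)
    qed
    then show ?thesis using True ye img by (simp add: inf_norm_Ax_def)
  next
    case False
    have yd: "y \<in> set (drop r (sign_strings k))"
      using yss False by (metis Un_iff append_take_drop_id set_append)
    have yin: "y \<in> set ?ts" unfolding tsm using yd by simp
    have "\<bar>dot y x\<bar> = real (length y) + 1"
      using ys ly kb0 kn lx yj sx by (intro dot_eq) auto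
    then have hy: "h y = sqrt (real k + 1)"
      unfolding h_def using ly by (simp add: real_div_sqrt)
    have "Max (h ` set ?ts) = sqrt (real k + 1)"
    proof (rule Max_eqI[OF fin])
      fix v assume "v \<in> h ` set ?ts"
      then obtain t' where t': "t' \<in> set ?ts" "v = h t'" by auto
      from t'(1)[unfolded tsm] show "v \<le> sqrt (real k + 1)"
      proof
        assume "\<exists>s\<in>set (take r (sign_strings k)). t' = s@[-1] \<or> t' = s@[1]"
        then obtain s c where s: "s \<in> set (take r (sign_strings k))" "t' = s@[c]" by blast
        have ls: "length s = k" using s(1) ss_elem in_set_takeD by metis
        have "s \<noteq> y" using s(1) False by auto
        then obtain j where j: "j < k" "s!j \<noteq> y!j" using ls ly nth_equalityI by metis
        have "\<bar>dot t' x\<bar> + 1 \<le> real (length t')"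
        proof (rule dot_mis)
          show "set t' \<subseteq> {-1,1}" "length t' + 1 \<le> length x" using tel[OF t'(1)] by auto
          show "set x \<subseteq> {-1,1}" by (rule sx)
          show "j < length t'" using j ls s(2) by simp
          show "t'!j \<noteq> x!0 * x!(j+1)" using j ls s(2) yj by (simp add: nth_append)
        qed
        then have d: "\<bar>dot t' x\<bar> \<le> real k" using ls s(2) by simp
        have "v = \<bar>dot t' x\<bar> / sqrt (real k + 2)" using t'(2) ls s(2) by (simp add: h_def add.commute)
        also have "\<dots> \<le> (real k + 1) / sqrt (real k + 1)"
          using d by (intro frac_le) auto
        also have "\<dots> = sqrt (real k + 1)" by (rule real_div_sqrt) simp
        finally show ?thesis .
      next
        assume "t' \<in> set (drop r (sign_strings k))"
        then have "length t' = k" using ss_elem in_set_dropD by metis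
        then show ?thesis using hb[OF t'(1)] t'(2) by simp
      qed
    next
      show "sqrt (real k + 1) \<in> h ` set ?ts" using yin hy by (metis image_eqI)
    qed
    then show ?thesis using False ye img by (simp add: inf_norm_Ax_def)
  qed
qed



lemma sumG:
  assumes "r \<le> 2^k"
  shows "(\<Sum>s\<in>sign_vectors k. if s \<in> set (take r (sign_strings k)) then sqrt (real k + 2) else sqrt (real k + 1))
     = real r * sqrt (real k + 2) + (2^k - real r) * sqrt (real k + 1)"
proof -
  let ?A = "sign_vectors k" and ?T = "set (take r (sign_strings k))"
  have TA: "?T \<subseteq> ?A" using ss_set[of k] set_take_subset by metis
  have cT: "card ?T = r" using assms by (simp add: distinct_card ss_distinct ss_len)
  have i1: "?A \<inter> ?T = ?T" using TA by auto
  have i2: "?A \<inter> - ?T = ?A - ?T" by auto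
  have cD: "card (?A - ?T) = 2^k - r" using TA cT by (simp add: card_Diff_subset sv_card sv_finite finite_subset)
  show ?thesis
    using cT cD assms by (simp add: sum.If_cases sv_finite i1 i2 of_nat_diff)
qed

theorem theorem3:
  fixes n :: nat
  assumes "n \<ge> 1"
  defines "k \<equiv> nat \<lfloor>log 2 (real n)\<rfloor>"
  shows "beta n n (unit_row_tree_matrix n) =
           (2 * sqrt (real k + 1) - sqrt (real k + 2))
           + real n / 2 ^ k * (sqrt (real k + 2) - sqrt (real k + 1))
         \<and> (n = 2 ^ k \<longrightarrow> beta n n (unit_row_tree_matrix n) = sqrt (real k + 1))"
proof -
  have kk: "k = tree_k n" by (simp add: k_def tree_k_def)
  define r where "r = n - 2^k"
  define G where "G = (\<lambda>s. if s \<in> set (take r (sign_strings k)) then sqrt (real k + 2) else sqrt (real k + 1))"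
  define F where "F = (\<lambda>z. G (map (\<lambda>a. hd z * a) (tl z)))"
  have kb: "2^k \<le> n" "n < 2^(k+1)" using k_bounds[OF assms(1)] kk by auto
  have kb0: "k + 1 \<le> 2^k" using less_exp[of k] by (simp only: Suc_le_eq Suc_eq_plus1[symmetric])
  define l where "l = n - (k+1)"
  have nl: "n = (k+1) + l" using kb kb0 by (simp add: l_def)
  have rle: "r \<le> 2^k" using kb by (simp add: r_def)
  have "(\<Sum>x\<in>sign_vectors n. inf_norm_Ax n n (unit_row_tree_matrix n) x) = (\<Sum>x\<in>sign_vectors n. F (take (k+1) x))"
    using point[OF assms(1)] by (intro sum.cong) (simp_all add: F_def G_def r_def kk)
  also have "\<dots> = 2^l * (\<Sum>z\<in>sign_vectors (Suc k). F z)"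
    unfolding nl using sum_take[of F "k+1" l] by simp
  also have "(\<Sum>z\<in>sign_vectors (Suc k). F z) = 2 * (\<Sum>s\<in>sign_vectors k. G s)"
    unfolding F_def by (rule sum_flip)
  also have "(\<Sum>s\<in>sign_vectors k. G s) = real r * sqrt (real k + 2) + (2^k - real r) * sqrt (real k + 1)"
    unfolding G_def by (rule sumG[OF rle])
  finally have S: "(\<Sum>x\<in>sign_vectors n. inf_norm_Ax n n (unit_row_tree_matrix n) x) =
     2^l * (2 * (real r * sqrt (real k + 2) + (2^k - real r) * sqrt (real k + 1)))" .
  have p: "(2::real)^n = 2^l * 2 * 2^k" unfolding nl by (simp add: power_add)
  have rr: "real r = real n - 2^k" using kb by (simp add: r_def of_nat_diff)
  have main: "beta n n (unit_row_tree_matrix n) =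
           (2 * sqrt (real k + 1) - sqrt (real k + 2))
           + real n / 2 ^ k * (sqrt (real k + 2) - sqrt (real k + 1))"
    unfolding beta_def S p rr by (simp add: field_simps)
  show ?thesis
  proof
    show "n = 2 ^ k \<longrightarrow> beta n n (unit_row_tree_matrix n) = sqrt (real k + 1)"
      using main by auto
  qed (rule main)
qed

end
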